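(* Let $X_t=(Z_t,S_t,P_t)$ be the agent state at time $t$, let $\tilde{A}_t$ be a random action sampled from a distribution $\nu$ over the finite action set $\mathcal{A}$, let $Q_\dagger$ be a random function mapping (history, action) pairs to $\mathbb{R}^n$, let $\tilde{Y}_{t+1}=Q_\dagger(H_t,\tilde{A}_t)+W_{t+1}$ where $W_{t+1}$ is zero-mean random noise in $\mathbb{R}^n$, and let $\pi_\chi$ be a target policy. If each component of $Q_\dagger$ has span at most $M_1$ and each component of $W_{t+1}$ has span at most $M_2$, then $$\mathbb{I}(\pi_\chi(\cdot|S_t); \tilde{A}_t, \tilde{Y}_{t+1} \,|\, X_t=X_t) \geq \frac{2}{n(M_1+M_2)^2} \mathrm{tr}\left(\mathrm{Cov}\left[\mathbb{E}\left[Q_\dagger(H_t, \tilde A_t) \,|\, X_t, \pi_\chi(\cdot|S_t)\right] \,\big|\, X_t\right]\right).$$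
   Context: All objects are random variables on a common probability space describing an agent interacting with an unknown (random) environment: $H_t$ is the history up to time $t$; the agent state $X_t$ consists of algorithmic state $Z_t$, aleatoric state $S_t$ and epistemic state $P_t$; $\tilde{A}_t$ is drawn from $\nu$ (which depends only on $X_t$) using randomness independent of everything else given $X_t$. $Q_\dagger$ is a vector of $n$ general value functions (depending on the unknown environment), and $\pi_\chi$ is a (random) policy, with $\pi_\chi(\cdot|S_t)$ its action distribution at $S_t$. The span of a real random variable $Y$ is $\mathrm{ess\,sup}\,Y-\mathrm{ess\,inf}\,Y$. $\mathbb{I}(\cdot;\cdot|X_t=X_t)$ is mutual information conditioned on the realized value of $X_t$; the inequality is between functions of $X_t$. *)

theory Defs
  imports "HOL-Probability.Probability"
begin

definition span_rv :: "'w measure \<Rightarrow> ('w \<Rightarrow> real) \<Rightarrow> ereal" where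
  "span_rv M Y = esssup M (\<lambda>w. ereal (Y w)) + esssup M (\<lambda>w. - ereal (Y w))"

definition fin_partitions :: "'x measure \<Rightarrow> 'x set set set" where
  "fin_partitions S = {P. finite P \<and> P \<subseteq> sets S \<and> disjoint P \<and> \<Union>P = space S}"

text \<open>Mutual information (in nats) between random elements X and Y of a probability
  space M, in the general (Dobrushin / Gelfand--Yaglom--Perez) sense: supremum over
  finite measurable partitions of the mutual information of the quantized variables.\<close>
definition mutual_info ::
  "'w measure \<Rightarrow> 'x measure \<Rightarrow> ('w \<Rightarrow> 'x) \<Rightarrow> 'y measure \<Rightarrow> ('w \<Rightarrow> 'y) \<Rightarrow> ereal" where
  "mutual_info M SX X SY Y =
     (SUP PQ \<in> fin_partitions SX \<times> fin_partitions SY.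
        ereal (\<Sum>A\<in>fst PQ. \<Sum>B\<in>snd PQ.
          (let pab = measure M {w \<in> space M. X w \<in> A \<and> Y w \<in> B};
               pa = measure M {w \<in> space M. X w \<in> A};
               pb = measure M {w \<in> space M. Y w \<in> B}
           in if pab = 0 then 0 else pab * ln (pab / (pa * pb)))))"

end

theory Submission
  imports Defs
begin



lemma hoeff_disc_pos:
  fixes r v :: "'j \<Rightarrow> real" and a b l :: real
  assumes fin: "finite J" and r0: "\<And>j. j \<in> J \<Longrightarrow> r j \<ge> 0" and r1: "(\<Sum>j\<in>J. r j) = 1"
    and vab: "\<And>j. j \<in> J \<Longrightarrow> v j \<in> {a..b}" and ab: "a < b" and l0: "l \<ge> 0"
  shows "(\<Sum>j\<in>J. r j * exp (l * (v j - (\<Sum>k\<in>J. r k * v k)))) \<le> exp (l\<^sup>2 * (b - a)\<^sup>2 / 8)"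
proof -
  define m where "m = (\<Sum>k\<in>J. r k * v k)"
  have ma: "a \<le> m"
  proof -
    have "(\<Sum>k\<in>J. r k * a) \<le> m" unfolding m_def
      by (rule sum_mono) (use r0 vab in \<open>auto intro: mult_left_mono\<close>)
    thus ?thesis by (simp add: sum_distrib_right[symmetric] r1)
  qed
  have mb: "m \<le> b"
  proof -
    have "m \<le> (\<Sum>k\<in>J. r k * b)" unfolding m_def
      by (rule sum_mono) (use r0 vab in \<open>auto intro: mult_left_mono\<close>)
    thus ?thesis by (simp add: sum_distrib_right[symmetric] r1)
  qed
  have cv: "exp (l * v j) \<le> (b - v j) / (b - a) * exp (l * a) + (v j - a) / (b - a) * exp (l * b)"
    if "j \<in> J" for j
  proof -
    define y where "y = (v j - a) / (b - a)"
    have y: "0 \<le> y" "y \<le> 1" using vab[OF that] ab by (auto simp: y_def field_simps)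
    have "exp (l * ((1 - y) *\<^sub>R a + y *\<^sub>R b)) \<le> (1 - y) * exp (l * a) + y * exp (l * b)"
      using y by (intro convex_onD[OF convex_on_exp[OF l0]]) auto
    also have "(1 - y) *\<^sub>R a + y *\<^sub>R b = a + y * (b - a)"
      by (simp add: algebra_simps)
    also have "y * (b - a) = v j - a" using ab by (simp add: y_def)
    also have "a + (v j - a) = v j" by simp
    also have "1 - y = (b - v j) / (b - a)"
      using ab by (simp add: y_def field_simps)
    finally show ?thesis by (simp add: y_def)
  qed
  have "(\<Sum>j\<in>J. r j * exp (l * v j)) \<le> (\<Sum>j\<in>J. r j * ((b - v j) / (b - a) * exp (l * a) + (v j - a) / (b - a) * exp (l * b)))"
    by (rule sum_mono) (use r0 cv in \<open>auto intro: mult_left_mono\<close>)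
  also have "\<dots> = (\<Sum>j\<in>J. (b * exp (l * a) - a * exp (l * b)) / (b - a) * r j + (exp (l * b) - exp (l * a)) / (b - a) * (r j * v j))"
    by (rule sum.cong) (use ab in \<open>auto simp: field_simps\<close>)
  also have "\<dots> = (b * exp (l * a) - a * exp (l * b)) / (b - a) * 1 + (exp (l * b) - exp (l * a)) / (b - a) * m"
    by (simp only: sum.distrib flip: sum_distrib_left) (simp add: r1 m_def)
  also have "\<dots> = ((b * exp (l * a) - a * exp (l * b)) + (exp (l * b) - exp (l * a)) * m) / (b - a)"
    by (simp add: add_divide_distrib)
  also have "\<dots> = ((b - m) * exp (l * a) + (m - a) * exp (l * b)) / (b - a)"
    by (rule arg_cong[where f="\<lambda>x. x / (b - a)"]) (simp add: algebra_simps)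
  finally have S: "(\<Sum>j\<in>J. r j * exp (l * v j)) \<le> ((b - m) * exp (l * a) + (m - a) * exp (l * b)) / (b - a)" .
  define p where "p = (m - a) / (b - a)"
  define z where "z = l * (b - a)"
  have p0: "p \<ge> 0" using ma ab by (simp add: p_def)
  have p1: "p \<le> 1" using mb ab by (simp add: p_def)
  have z0: "z \<ge> 0" using l0 ab by (simp add: z_def)
  have pos: "1 + p * (exp z - 1) > 0"
  proof -
    have "exp z \<ge> 1" using z0 by simp
    hence "p * (exp z - 1) \<ge> 0" using p0 by simp
    thus ?thesis by simp
  qed
  have H: "- z * p + ln (1 + p * (exp z - 1)) \<le> z\<^sup>2 / 8"
    using Hoeffdings_lemma_aux[OF z0 p0] by simp
  have eq1: "((b - m) * exp (l * a) + (m - a) * exp (l * b)) / (b - a) = exp (l * a) * (1 + p * (exp z - 1))"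
  proof -
    have "exp (l * b) = exp (l * a) * exp z" by (simp add: z_def exp_add[symmetric] algebra_simps)
    thus ?thesis using ab by (simp add: p_def field_simps)
  qed
  have "(\<Sum>j\<in>J. r j * exp (l * (v j - m))) = exp (- (l * m)) * (\<Sum>j\<in>J. r j * exp (l * v j))"
    by (simp add: sum_distrib_left right_diff_distrib exp_diff exp_minus field_simps)
  also have "\<dots> \<le> exp (- (l * m)) * (exp (l * a) * (1 + p * (exp z - 1)))"
    using S eq1 by simp
  also have "\<dots> = exp (- z * p + ln (1 + p * (exp z - 1)))"
  proof -
    have "l * m = l * a + z * p" using ab by (simp add: z_def p_def field_simps)
    thus ?thesis using pos by (simp add: exp_add exp_minus exp_diff field_simps)
  qed
  also have "\<dots> \<le> exp (z\<^sup>2 / 8)" using H by simp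
  also have "z\<^sup>2 = l\<^sup>2 * (b - a)\<^sup>2" by (simp add: z_def power_mult_distrib)
  finally show ?thesis by (simp add: m_def)
qed

lemma hoeff_disc:
  fixes r v :: "'j \<Rightarrow> real" and a b l :: real
  assumes fin: "finite J" and r0: "\<And>j. j \<in> J \<Longrightarrow> r j \<ge> 0" and r1: "(\<Sum>j\<in>J. r j) = 1"
    and vab: "\<And>j. j \<in> J \<Longrightarrow> v j \<in> {a..b}" and ab: "a < b"
  shows "(\<Sum>j\<in>J. r j * exp (l * (v j - (\<Sum>k\<in>J. r k * v k)))) \<le> exp (l\<^sup>2 * (b - a)\<^sup>2 / 8)"
proof (cases "l \<ge> 0")
  case True
  then show ?thesis using hoeff_disc_pos[OF assms True] by simp
next
  case False
  have "(\<Sum>j\<in>J. r j * exp ((-l) * ((-v j) - (\<Sum>k\<in>J. r k * (-v k))))) \<le> exp ((-l)\<^sup>2 * ((-a) - (-b))\<^sup>2 / 8)"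
    by (rule hoeff_disc_pos[OF fin r0 r1]) (use vab ab False in auto)
  moreover have "(-a) - (-b) = b - a" by simp
  moreover have "\<And>j. (-l) * ((-v j) - (\<Sum>k\<in>J. r k * (-v k))) = l * (v j - (\<Sum>k\<in>J. r k * v k))"
    by (simp add: sum_negf algebra_simps)
  ultimately show ?thesis by simp
qed

lemma dv_disc:
  fixes q r h :: "'j \<Rightarrow> real"
  assumes fin: "finite J" and q0: "\<And>j. j \<in> J \<Longrightarrow> q j \<ge> 0" and r0: "\<And>j. j \<in> J \<Longrightarrow> r j \<ge> 0"
    and q1: "(\<Sum>j\<in>J. q j) = 1" and r1: "(\<Sum>j\<in>J. r j) = 1"
    and qr: "\<And>j. j \<in> J \<Longrightarrow> q j > 0 \<Longrightarrow> r j > 0"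
  shows "(\<Sum>j\<in>J. q j * h j) \<le> (\<Sum>j\<in>J. if q j = 0 then 0 else q j * ln (q j / r j)) + ln (\<Sum>j\<in>J. r j * exp (h j))"
proof -
  define Z where "Z = (\<Sum>j\<in>J. r j * exp (h j))"
  obtain j0 where j0: "j0 \<in> J" "r j0 > 0"
  proof -
    have "\<not> (\<forall>j\<in>J. r j = 0)" using r1 by (metis sum.neutral zero_neq_one)
    then obtain j0 where "j0 \<in> J" "r j0 \<noteq> 0" by auto
    then show ?thesis using r0 that by force
  qed
  have Zpos: "Z > 0"
  proof -
    have "r j0 * exp (h j0) \<le> Z" unfolding Z_def
      by (rule member_le_sum) (use j0 r0 fin in auto)
    moreover have "r j0 * exp (h j0) > 0" using j0 by simp
    ultimately show ?thesis by linarith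
  qed
  have key: "q j * h j - (if q j = 0 then 0 else q j * ln (q j / r j)) - q j * ln Z \<le> r j * exp (h j) / Z - q j"
    if j: "j \<in> J" for j
  proof (cases "q j = 0")
    case True
    then show ?thesis using r0[OF j] Zpos by simp
  next
    case False
    hence qp: "q j > 0" using q0[OF j] by simp
    have rp: "r j > 0" using qr[OF j qp] .
    have "q j * h j - q j * ln (q j / r j) - q j * ln Z = q j * ln (r j * exp (h j) / (q j * Z))"
      using qp rp Zpos by (simp add: ln_div ln_mult algebra_simps)
    also have "\<dots> \<le> q j * (r j * exp (h j) / (q j * Z) - 1)"
      using qp rp Zpos by (intro mult_left_mono ln_le_minus_one) auto
    also have "\<dots> = r j * exp (h j) / Z - q j" using qp by (simp add: field_simps)
    finally show ?thesis using False by simp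
  qed
  have "(\<Sum>j\<in>J. q j * h j - (if q j = 0 then 0 else q j * ln (q j / r j)) - q j * ln Z)
        \<le> (\<Sum>j\<in>J. r j * exp (h j) / Z - q j)"
    by (rule sum_mono) (use key in auto)
  also have "\<dots> = 0" using Zpos by (simp add: sum_subtractf q1 Z_def flip: sum_divide_distrib)
  finally have "(\<Sum>j\<in>J. q j * h j) - (\<Sum>j\<in>J. if q j = 0 then 0 else q j * ln (q j / r j)) - ln Z \<le> 0"
    by (simp add: sum_subtractf q1 flip: sum_distrib_right)
  thus ?thesis by (simp add: Z_def)
qed

lemma pinsker_disc:
  fixes q r v :: "'j \<Rightarrow> real"
  assumes fin: "finite J" and q0: "\<And>j. j \<in> J \<Longrightarrow> q j \<ge> 0" and r0: "\<And>j. j \<in> J \<Longrightarrow> r j \<ge> 0"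
    and q1: "(\<Sum>j\<in>J. q j) = 1" and r1: "(\<Sum>j\<in>J. r j) = 1"
    and qr: "\<And>j. j \<in> J \<Longrightarrow> q j > 0 \<Longrightarrow> r j > 0"
    and v: "\<And>j. j \<in> J \<Longrightarrow> v j \<in> {lo..lo+c}" and c: "c > 0"
  shows "((\<Sum>j\<in>J. q j * v j) - (\<Sum>j\<in>J. r j * v j))\<^sup>2 \<le> c\<^sup>2 / 2 * (\<Sum>j\<in>J. if q j = 0 then 0 else q j * ln (q j / r j))"
proof -
  define KL where "KL = (\<Sum>j\<in>J. if q j = 0 then 0 else q j * ln (q j / r j))"
  define mr where "mr = (\<Sum>j\<in>J. r j * v j)"
  define d where "d = (\<Sum>j\<in>J. q j * v j) - mr"
  have gen: "l * d \<le> KL + l\<^sup>2 * c\<^sup>2 / 8" for l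
  proof -
    have dv: "(\<Sum>j\<in>J. q j * (l * v j)) \<le> KL + ln (\<Sum>j\<in>J. r j * exp (l * v j))"
      using dv_disc[OF fin q0 r0 q1 r1 qr, of "\<lambda>j. l * v j"] by (simp add: KL_def)
    have ho: "(\<Sum>j\<in>J. r j * exp (l * (v j - mr))) \<le> exp (l\<^sup>2 * ((lo + c) - lo)\<^sup>2 / 8)"
      unfolding mr_def by (rule hoeff_disc[OF fin r0 r1]) (use v c in auto)
    have eq: "(\<Sum>j\<in>J. r j * exp (l * v j)) = exp (l * mr) * (\<Sum>j\<in>J. r j * exp (l * (v j - mr)))"
      by (simp add: sum_distrib_left right_diff_distrib exp_diff field_simps)
    have spos: "(\<Sum>j\<in>J. r j * exp (l * (v j - mr))) > 0"
    proof -
      obtain j0 where "j0 \<in> J" "r j0 \<noteq> 0" using r1 by (metis sum.neutral zero_neq_one)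
      hence "r j0 > 0" using r0 by force
      hence "0 < r j0 * exp (l * (v j0 - mr))" by simp
      also have "\<dots> \<le> (\<Sum>j\<in>J. r j * exp (l * (v j - mr)))"
        by (rule member_le_sum) (use \<open>j0 \<in> J\<close> r0 fin in auto)
      finally show ?thesis .
    qed
    have "ln (\<Sum>j\<in>J. r j * exp (l * v j)) = l * mr + ln (\<Sum>j\<in>J. r j * exp (l * (v j - mr)))"
      using spos by (simp add: eq ln_mult)
    also have "\<dots> \<le> l * mr + l\<^sup>2 * c\<^sup>2 / 8"
    proof -
      have "ln (\<Sum>j\<in>J. r j * exp (l * (v j - mr))) \<le> ln (exp (l\<^sup>2 * c\<^sup>2 / 8))"
        using ho spos by (subst ln_le_cancel_iff) auto
      thus ?thesis by simp
    qed
    finally have "ln (\<Sum>j\<in>J. r j * exp (l * v j)) \<le> l * mr + l\<^sup>2 * c\<^sup>2 / 8" .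
    moreover have "(\<Sum>j\<in>J. q j * (l * v j)) = l * (\<Sum>j\<in>J. q j * v j)"
      by (simp add: sum_distrib_left algebra_simps)
    ultimately show ?thesis using dv unfolding d_def by (simp add: algebra_simps)
  qed
  have "4 * d\<^sup>2 / c\<^sup>2 \<le> KL + (4 * d / c\<^sup>2)\<^sup>2 * c\<^sup>2 / 8"
    using gen[of "4 * d / c\<^sup>2"] by (simp add: power2_eq_square)
  also have "(4 * d / c\<^sup>2)\<^sup>2 * c\<^sup>2 / 8 = 2 * d\<^sup>2 / c\<^sup>2"
    using c by (simp add: field_simps power2_eq_square)
  finally have "2 * d\<^sup>2 / c\<^sup>2 \<le> KL" by simp
  hence "d\<^sup>2 \<le> c\<^sup>2 / 2 * KL" using c by (simp add: field_simps)
  thus ?thesis by (simp add: d_def mr_def KL_def)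
qed


lemma mi_disc:
  fixes p :: "'i \<Rightarrow> 'j \<Rightarrow> real" and pa :: "'i \<Rightarrow> real" and pb v :: "'j \<Rightarrow> real"
  assumes fI: "finite I" and fJ: "finite J"
    and p0: "\<And>i j. i \<in> I \<Longrightarrow> j \<in> J \<Longrightarrow> p i j \<ge> 0"
    and pa: "\<And>i. i \<in> I \<Longrightarrow> pa i = (\<Sum>j\<in>J. p i j)"
    and pb: "\<And>j. j \<in> J \<Longrightarrow> pb j = (\<Sum>i\<in>I. p i j)"
    and s1: "(\<Sum>i\<in>I. pa i) = 1"
    and v: "\<And>j. j \<in> J \<Longrightarrow> v j \<in> {lo..lo+c}" and c: "c > 0"
  shows "(\<Sum>i\<in>I. pa i * ((\<Sum>j\<in>J. p i j * v j) / pa i - (\<Sum>j\<in>J. pb j * v j))\<^sup>2)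
         \<le> c\<^sup>2 / 2 * (\<Sum>i\<in>I. \<Sum>j\<in>J. if p i j = 0 then 0 else p i j * ln (p i j / (pa i * pb j)))"
proof -
  have pb0: "pb j \<ge> 0" if "j \<in> J" for j using pb[OF that] p0 that by (simp add: sum_nonneg)
  have pb1: "(\<Sum>j\<in>J. pb j) = 1"
  proof -
    have "(\<Sum>j\<in>J. pb j) = (\<Sum>j\<in>J. \<Sum>i\<in>I. p i j)" by (rule sum.cong) (use pb in auto)
    also have "\<dots> = (\<Sum>i\<in>I. \<Sum>j\<in>J. p i j)" by (rule sum.swap)
    also have "\<dots> = (\<Sum>i\<in>I. pa i)" by (rule sum.cong) (use pa in auto)
    finally show ?thesis using s1 by simp
  qed
  have row: "pa i * ((\<Sum>j\<in>J. p i j * v j) / pa i - (\<Sum>j\<in>J. pb j * v j))\<^sup>2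
         \<le> c\<^sup>2 / 2 * (\<Sum>j\<in>J. if p i j = 0 then 0 else p i j * ln (p i j / (pa i * pb j)))"
    if i: "i \<in> I" for i
  proof (cases "pa i = 0")
    case True
    hence "\<forall>j\<in>J. p i j = 0" using pa[OF i] p0[OF i] fJ by (simp add: sum_nonneg_eq_0_iff)
    then show ?thesis using True by simp
  next
    case False
    have pa0: "pa i \<ge> 0" using pa[OF i] p0[OF i] by (simp add: sum_nonneg)
    hence pap: "pa i > 0" using False by simp
    define q where "q j = p i j / pa i" for j
    have q0: "q j \<ge> 0" if "j \<in> J" for j using p0[OF i that] pap by (simp add: q_def)
    have q1: "(\<Sum>j\<in>J. q j) = 1" using pap pa[OF i] by (simp add: q_def flip: sum_divide_distrib)
    have qr: "pb j > 0" if "j \<in> J" "q j > 0" for j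
    proof -
      have "p i j > 0" using that pap by (simp add: q_def zero_less_divide_iff)
      also have "p i j \<le> pb j" unfolding pb[OF that(1)]
        by (rule member_le_sum) (use i p0 that fI in auto)
      finally show ?thesis .
    qed
    have P: "((\<Sum>j\<in>J. q j * v j) - (\<Sum>j\<in>J. pb j * v j))\<^sup>2 \<le> c\<^sup>2 / 2 * (\<Sum>j\<in>J. if q j = 0 then 0 else q j * ln (q j / pb j))"
      by (rule pinsker_disc[OF fJ q0 pb0 q1 pb1 qr v c])
    have e1: "(\<Sum>j\<in>J. q j * v j) = (\<Sum>j\<in>J. p i j * v j) / pa i"
      by (simp add: q_def sum_divide_distrib)
    have e2: "pa i * (\<Sum>j\<in>J. if q j = 0 then 0 else q j * ln (q j / pb j))
        = (\<Sum>j\<in>J. if p i j = 0 then 0 else p i j * ln (p i j / (pa i * pb j)))"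
      unfolding sum_distrib_left
      by (rule sum.cong) (use pap in \<open>auto simp: q_def\<close>)
    have "pa i * ((\<Sum>j\<in>J. p i j * v j) / pa i - (\<Sum>j\<in>J. pb j * v j))\<^sup>2
        \<le> pa i * (c\<^sup>2 / 2 * (\<Sum>j\<in>J. if q j = 0 then 0 else q j * ln (q j / pb j)))"
      using mult_left_mono[OF P pa0] e1 by simp
    also have "\<dots> = c\<^sup>2 / 2 * (\<Sum>j\<in>J. if p i j = 0 then 0 else p i j * ln (p i j / (pa i * pb j)))"
      using e2 by (simp add: algebra_simps)
    finally show ?thesis .
  qed
  have "(\<Sum>i\<in>I. pa i * ((\<Sum>j\<in>J. p i j * v j) / pa i - (\<Sum>j\<in>J. pb j * v j))\<^sup>2) \<le> (\<Sum>i\<in>I. c\<^sup>2 / 2 * (\<Sum>j\<in>J. if p i j = 0 then 0 else p i j * ln (p i j / (pa i * pb j))))"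
    by (rule sum_mono) (rule row)
  thus ?thesis by (simp add: sum_distrib_left)
qed




lemma part_unique:
  assumes P: "P \<in> fin_partitions S" and x: "x \<in> space S"
  shows "\<exists>!A. A \<in> P \<and> x \<in> A"
proof -
  have "x \<in> \<Union>P" using P x by (simp add: fin_partitions_def)
  then obtain A where A: "A \<in> P" "x \<in> A" by auto
  moreover have "B = A" if "B \<in> P" "x \<in> B" for B
    using P A that unfolding fin_partitions_def disjoint_def by blast
  ultimately show ?thesis by blast
qed

lemma part_sum_eval:
  fixes v :: "'x set \<Rightarrow> real"
  assumes P: "P \<in> fin_partitions S" and Z: "Z \<in> space M \<rightarrow> space S" and w: "w \<in> space M"
    and B0: "B0 \<in> P" "Z w \<in> B0"
  shows "(\<Sum>B\<in>P. v B * indicator {w \<in> space M. Q w \<and> Z w \<in> B} w) = (if Q w then v B0 else 0)"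
proof -
  have fin: "finite P" using P by (simp add: fin_partitions_def)
  have eq: "B \<in> P \<Longrightarrow> Z w \<in> B \<longleftrightarrow> B = B0" for B
    using part_unique[OF P, of "Z w"] Z w B0 by auto
  have "(\<Sum>B\<in>P. v B * indicator {w \<in> space M. Q w \<and> Z w \<in> B} w) = (\<Sum>B\<in>P. if B = B0 then (if Q w then v B else 0) else 0)"
    by (rule sum.cong) (use eq w in \<open>auto simp: indicator_def\<close>)
  also have "\<dots> = (if Q w then v B0 else 0)" using fin B0 by (simp add: sum.delta')
  finally show ?thesis .
qed

lemma part_sum_integral:
  fixes v :: "'x set \<Rightarrow> real"
  assumes pr: "prob_space M" and P: "P \<in> fin_partitions S" and Z: "Z \<in> M \<rightarrow>\<^sub>M S"
    and Q: "{w \<in> space M. Q w} \<in> sets M"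
  shows "(\<integral>w. (\<Sum>B\<in>P. v B * indicator {w \<in> space M. Q w \<and> Z w \<in> B} w) \<partial>M)
       = (\<Sum>B\<in>P. measure M {w \<in> space M. Q w \<and> Z w \<in> B} * v B)"
proof -
  interpret prob_space M by fact
  have meas: "{w \<in> space M. Q w \<and> Z w \<in> B} \<in> sets M" if "B \<in> P" for B
  proof -
    have "B \<in> sets S" using P that by (auto simp: fin_partitions_def)
    hence "Z -` B \<inter> space M \<in> sets M" by (rule measurable_sets[OF Z])
    hence "{w \<in> space M. Q w} \<inter> (Z -` B \<inter> space M) \<in> sets M" using Q by auto
    moreover have "{w \<in> space M. Q w \<and> Z w \<in> B} = {w \<in> space M. Q w} \<inter> (Z -` B \<inter> space M)" by auto
    ultimately show ?thesis by simp
  qed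
  have "(\<integral>w. (\<Sum>B\<in>P. v B * indicator {w \<in> space M. Q w \<and> Z w \<in> B} w) \<partial>M)
      = (\<Sum>B\<in>P. (\<integral>w. v B * indicator {w \<in> space M. Q w \<and> Z w \<in> B} w \<partial>M))"
    by (rule Bochner_Integration.integral_sum) (use meas in \<open>auto intro!: integrable_mult_right integrable_real_indicator simp: emeasure_eq_measure\<close>)
  also have "\<dots> = (\<Sum>B\<in>P. measure M {w \<in> space M. Q w \<and> Z w \<in> B} * v B)"
    by (rule sum.cong) (use meas in \<open>auto simp: Int_absorb2 sets.sets_into_space\<close>)
  finally show ?thesis .
qed

lemma part_measure_sum:
  assumes pr: "prob_space M" and P: "P \<in> fin_partitions S" and Z: "Z \<in> M \<rightarrow>\<^sub>M S"
    and Q: "{w \<in> space M. Q w} \<in> sets M"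
  shows "(\<Sum>B\<in>P. measure M {w \<in> space M. Q w \<and> Z w \<in> B}) = measure M {w \<in> space M. Q w}"
proof -
  interpret prob_space M by fact
  have "(\<Sum>B\<in>P. measure M {w \<in> space M. Q w \<and> Z w \<in> B}) = (\<Sum>B\<in>P. measure M {w \<in> space M. Q w \<and> Z w \<in> B} * 1)" by simp
  also have "\<dots> = (\<integral>w. (\<Sum>B\<in>P. 1 * indicator {w \<in> space M. Q w \<and> Z w \<in> B} w) \<partial>M)"
    by (rule part_sum_integral[symmetric, OF pr P Z Q])
  also have "\<dots> = (\<integral>w. indicator {w \<in> space M. Q w} w \<partial>M)"
  proof (rule Bochner_Integration.integral_cong[OF refl])
    fix w assume w: "w \<in> space M"
    have Zw: "Z w \<in> space S" using Z w by (auto simp: measurable_def)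
    obtain B0 where B0: "B0 \<in> P" "Z w \<in> B0" using part_unique[OF P Zw] by auto
    have Zf: "Z \<in> space M \<rightarrow> space S" using Z by (simp add: measurable_def)
    have "(\<Sum>B\<in>P. (1::real) * indicator {w \<in> space M. Q w \<and> Z w \<in> B} w) = (if Q w then 1 else 0)"
      by (rule part_sum_eval[OF P Zf w B0])
    then show "(\<Sum>B\<in>P. (1::real) * indicator {w \<in> space M. Q w \<and> Z w \<in> B} w) = indicator {w \<in> space M. Q w} w"
      using w by (simp add: indicator_def)
  qed
  also have "\<dots> = measure M {w \<in> space M. Q w}" using Q by (simp add: Int_absorb2 sets.sets_into_space)
  finally show ?thesis .
qed

lemma quant_le_mi:
  assumes "P \<in> fin_partitions SX" "Bs \<in> fin_partitions SY"
  shows "ereal (\<Sum>A\<in>P. \<Sum>B\<in>Bs.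
          (let pab = measure M {w \<in> space M. X w \<in> A \<and> Y w \<in> B};
               pa = measure M {w \<in> space M. X w \<in> A};
               pb = measure M {w \<in> space M. Y w \<in> B}
           in if pab = 0 then 0 else pab * ln (pab / (pa * pb)))) \<le> mutual_info M SX X SY Y"
  unfolding mutual_info_def
  by (rule SUP_upper2[where i="(P, Bs)"]) (use assms in auto)




lemma ind_int_bound:
  assumes pr: "prob_space M" and S: "S \<in> sets M" and u: "integrable M u"
    and b: "AE w in M. w \<in> S \<longrightarrow> \<bar>u w\<bar> \<le> d"
  shows "\<bar>\<integral>w. indicator S w * u w \<partial>M\<bar> \<le> d * measure M S"
proof -
  interpret prob_space M by fact
  have "\<bar>\<integral>w. indicator S w * u w \<partial>M\<bar> \<le> (\<integral>w. \<bar>indicator S w * u w\<bar> \<partial>M)"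
    by (rule integral_abs_bound)
  also have "\<dots> \<le> (\<integral>w. indicator S w * d \<partial>M)"
  proof (rule integral_mono_AE)
    show "integrable M (\<lambda>w. \<bar>indicator S w * u w\<bar>)"
      using integrable_mult_indicator[OF S u] by (intro integrable_abs) simp
    show "integrable M (\<lambda>w. indicator S w * d)"
      using S by (intro integrable_mult_left integrable_real_indicator) (auto simp: emeasure_eq_measure)
    show "AE w in M. \<bar>indicator S w * u w\<bar> \<le> indicator S w * d"
      using b by eventually_elim (auto simp: indicator_def abs_mult)
  qed
  also have "\<dots> = d * measure M S" using S by simp
  finally show ?thesis .
qed

lemma exp_in_interval:
  fixes u :: "'w \<Rightarrow> real"
  assumes pr: "prob_space M" and u: "integrable M u" and b: "AE w in M. u w \<in> {a..b}"
  shows "(\<integral>w. u w \<partial>M) \<in> {a..b}"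
proof -
  interpret prob_space M by fact
  have "(\<integral>w. a \<partial>M) \<le> (\<integral>w. u w \<partial>M)"
    by (rule integral_mono_AE) (use u b in \<open>auto elim: eventually_mono\<close>)
  moreover have "(\<integral>w. u w \<partial>M) \<le> (\<integral>w. b \<partial>M)"
    by (rule integral_mono_AE) (use u b in \<open>auto elim: eventually_mono\<close>)
  ultimately show ?thesis by (simp add: prob_space)
qed

lemma sq_close:
  fixes x y c d :: real
  assumes "\<bar>x\<bar> \<le> c" "\<bar>x - y\<bar> \<le> 4 * d"  "d \<ge> 0"
  shows "x\<^sup>2 \<le> y\<^sup>2 + 4 * d * (2 * c + 4 * d)"
proof -
  have "x\<^sup>2 - y\<^sup>2 = (x - y) * (x + y)" by (simp add: power2_eq_square algebra_simps)
  also have "\<dots> \<le> \<bar>x - y\<bar> * \<bar>x + y\<bar>" by (metis abs_ge_self abs_mult)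
  also have "\<dots> \<le> (4 * d) * (2 * c + 4 * d)"
  proof (rule mult_mono)
    show "\<bar>x + y\<bar> \<le> 2 * c + 4 * d" using assms by linarith
  qed (use assms in auto)
  finally show ?thesis by simp
qed


lemma approx_var:
  fixes g h V :: "'w \<Rightarrow> real" and X :: "'w \<Rightarrow> 'x"
  assumes pr: "prob_space M" and P: "P \<in> fin_partitions SX" and X: "X \<in> M \<rightarrow>\<^sub>M SX"
    and g: "g \<in> borel_measurable M" and gI: "AE w in M. g w \<in> {lo..lo+c}"
    and h: "h \<in> borel_measurable M" and hI: "AE w in M. h w \<in> {lo..lo+c}"
    and V: "V \<in> borel_measurable M" and Vh: "AE w in M. \<bar>V w - h w\<bar> \<le> d"
    and gh: "\<And>A. A \<in> P \<Longrightarrow> (\<integral>w. indicator {w\<in>space M. X w \<in> A} w * g w \<partial>M) = (\<integral>w. indicator {w\<in>space M. X w \<in> A} w * h w \<partial>M)"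
    and gint: "(\<integral>w. g w \<partial>M) = (\<integral>w. h w \<partial>M)"
    and cell: "\<And>A. A \<in> P \<Longrightarrow> \<exists>t. AE w in M. X w \<in> A \<longrightarrow> \<bar>g w - t\<bar> \<le> d"
    and d: "d \<ge> 0" and c: "c \<ge> 0"
  shows "prob_space.variance M g \<le> (\<Sum>A\<in>P. measure M {w\<in>space M. X w \<in> A} *
            ((\<integral>w. indicator {w\<in>space M. X w \<in> A} w * V w \<partial>M) / measure M {w\<in>space M. X w \<in> A} - (\<integral>w. V w \<partial>M))\<^sup>2)
          + 4 * d * (2 * c + 4 * d)"
proof -
  interpret prob_space M by fact
  define S where "S A = {w\<in>space M. X w \<in> A}" for A
  have finP: "finite P" using P by (simp add: fin_partitions_def)
  have Ssets: "S A \<in> events" if "A \<in> P" for A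
  proof -
    have "A \<in> sets SX" using P that by (auto simp: fin_partitions_def)
    hence "X -` A \<inter> space M \<in> events" by (rule measurable_sets[OF X])
    moreover have "S A = X -` A \<inter> space M" by (auto simp: S_def)
    ultimately show ?thesis by simp
  qed
  have gi: "integrable M g"
  proof (rule integrable_const_bound[where B="\<bar>lo\<bar> + \<bar>c\<bar>"])
    show "AE x in M. norm (g x) \<le> \<bar>lo\<bar> + \<bar>c\<bar>"
      using gI by eventually_elim auto
  qed (rule g)
  have hi: "integrable M h"
  proof (rule integrable_const_bound[where B="\<bar>lo\<bar> + \<bar>c\<bar>"])
    show "AE x in M. norm (h x) \<le> \<bar>lo\<bar> + \<bar>c\<bar>"
      using hI by eventually_elim auto
  qed (rule h)
  have Vi: "integrable M V"
  proof (rule integrable_const_bound[where B="\<bar>lo\<bar> + \<bar>c\<bar> + d"])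
    show "AE x in M. norm (V x) \<le> \<bar>lo\<bar> + \<bar>c\<bar> + d"
      using hI Vh by eventually_elim auto
  qed (rule V)
  define \<mu> where "\<mu> = (\<integral>w. g w \<partial>M)"
  define m where "m = (\<integral>w. V w \<partial>M)"
  have \<mu>I: "\<mu> \<in> {lo..lo+c}" unfolding \<mu>_def by (rule exp_in_interval[OF pr gi gI])
  have m\<mu>: "\<bar>m - \<mu>\<bar> \<le> d"
  proof -
    have "m - \<mu> = (\<integral>w. V w - h w \<partial>M)" using Vi hi gint by (simp add: m_def \<mu>_def)
    also have "\<bar>\<dots>\<bar> \<le> (\<integral>w. \<bar>V w - h w\<bar> \<partial>M)" by (rule integral_abs_bound)
    also have "\<dots> \<le> (\<integral>w. d \<partial>M)"
      by (rule integral_mono_AE) (use Vi hi Vh in auto)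
    finally show ?thesis by (simp add: prob_space)
  qed
  obtain t where t: "\<And>A. A \<in> P \<Longrightarrow> AE w in M. X w \<in> A \<longrightarrow> \<bar>g w - t A\<bar> \<le> d"
    using cell by metis
  define a where "a A = (\<integral>w. indicator (S A) w * V w \<partial>M) / measure M (S A)" for A
  have aclose: "\<bar>a A - t A\<bar> \<le> 2 * d" if A: "A \<in> P" and pos: "measure M (S A) > 0" for A
  proof -
    have iV: "integrable M (\<lambda>w. indicator (S A) w * V w)"
      using integrable_mult_indicator[OF Ssets[OF A] Vi] by simp
    have ih: "integrable M (\<lambda>w. indicator (S A) w * h w)"
      using integrable_mult_indicator[OF Ssets[OF A] hi] by simp
    have ig: "integrable M (\<lambda>w. indicator (S A) w * g w)"
      using integrable_mult_indicator[OF Ssets[OF A] gi] by simp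
    have i1: "integrable M (\<lambda>w. indicator (S A) w * t A)"
      using Ssets[OF A] by (intro integrable_mult_left integrable_real_indicator) (auto simp: emeasure_eq_measure)
    have e1: "(\<integral>w. indicator (S A) w * (V w - h w) \<partial>M) = (\<integral>w. indicator (S A) w * V w \<partial>M) - (\<integral>w. indicator (S A) w * h w \<partial>M)"
      using iV ih by (simp add: right_diff_distrib)
    have e2: "(\<integral>w. indicator (S A) w * (g w - t A) \<partial>M) = (\<integral>w. indicator (S A) w * g w \<partial>M) - t A * measure M (S A)"
    proof -
      have "(\<integral>w. indicator (S A) w * (g w - t A) \<partial>M) = (\<integral>w. indicator (S A) w * g w \<partial>M) - (\<integral>w. indicator (S A) w * t A \<partial>M)"
        using ig i1 by (simp add: right_diff_distrib)
      also have "(\<integral>w. indicator (S A) w * t A \<partial>M) = t A * measure M (S A)"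
        using Ssets[OF A] by simp
      finally show ?thesis .
    qed
    have ghA: "(\<integral>w. indicator (S A) w * g w \<partial>M) = (\<integral>w. indicator (S A) w * h w \<partial>M)"
      using gh[OF A] by (simp add: S_def)
    have b1: "\<bar>\<integral>w. indicator (S A) w * (V w - h w) \<partial>M\<bar> \<le> d * measure M (S A)"
      by (rule ind_int_bound[OF pr Ssets[OF A]]) (use Vi hi Vh in \<open>auto elim: eventually_mono\<close>)
    have b2: "\<bar>\<integral>w. indicator (S A) w * (g w - t A) \<partial>M\<bar> \<le> d * measure M (S A)"
      by (rule ind_int_bound[OF pr Ssets[OF A]]) (use gi t[OF A] in \<open>auto elim: eventually_mono simp: S_def\<close>)
    have "\<bar>(\<integral>w. indicator (S A) w * V w \<partial>M) - t A * measure M (S A)\<bar> \<le> 2 * d * measure M (S A)"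
      using b1 b2 e1 e2 ghA by linarith
    hence "\<bar>(\<integral>w. indicator (S A) w * V w \<partial>M) - t A * measure M (S A)\<bar> / measure M (S A) \<le> 2 * d"
      using pos by (simp add: divide_le_eq)
    moreover have "\<bar>(\<integral>w. indicator (S A) w * V w \<partial>M) - t A * measure M (S A)\<bar> / measure M (S A) = \<bar>a A - t A\<bar>"
      using pos by (simp add: a_def abs_div_pos[symmetric] field_simps)
    ultimately show ?thesis by simp
  qed
  have AEnull: "AE w in M. \<forall>A\<in>P. measure M (S A) = 0 \<longrightarrow> w \<notin> S A"
  proof (rule AE_finite_allI[OF finP])
    fix A assume A: "A \<in> P"
    show "AE w in M. measure M (S A) = 0 \<longrightarrow> w \<notin> S A"
    proof (cases "measure M (S A) = 0")
      case True
      hence "S A \<in> null_sets M" using Ssets[OF A] by (simp add: null_sets_def emeasure_eq_measure)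
      from AE_not_in[OF this] show ?thesis by simp
    qed simp
  qed
  have AEt: "AE w in M. \<forall>A\<in>P. X w \<in> A \<longrightarrow> \<bar>g w - t A\<bar> \<le> d"
    by (rule AE_finite_allI[OF finP]) (rule t)
  have Xf: "X \<in> space M \<rightarrow> space SX" using X by (simp add: measurable_def)
  define K where "K = 4 * d * (2 * c + 4 * d)"
  have pt: "AE w in M. (g w - \<mu>)\<^sup>2 \<le> (\<Sum>A\<in>P. (a A - m)\<^sup>2 * indicator {w\<in>space M. True \<and> X w \<in> A} w) + K"
    using AEnull AEt gI AE_space
  proof eventually_elim
    case (elim w)
    have Xw: "X w \<in> space SX" using Xf elim(4) by auto
    obtain A0 where A0: "A0 \<in> P" "X w \<in> A0" using part_unique[OF P Xw] by auto
    have wS: "w \<in> S A0" using A0 elim(4) by (simp add: S_def)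
    have "measure M (S A0) \<noteq> 0" using elim(1) A0 wS by auto
    hence pos: "measure M (S A0) > 0" using measure_nonneg[of M "S A0"] by linarith
    have close: "\<bar>(g w - \<mu>) - (a A0 - m)\<bar> \<le> 4 * d"
      using aclose[OF A0(1) pos] elim(2) A0 m\<mu> by auto
    have xb: "\<bar>g w - \<mu>\<bar> \<le> c" using elim(3) \<mu>I by auto
    have sumeq: "(\<Sum>A\<in>P. (a A - m)\<^sup>2 * indicator {w\<in>space M. True \<and> X w \<in> A} w) = (a A0 - m)\<^sup>2"
      using part_sum_eval[OF P Xf elim(4) A0, of "\<lambda>A. (a A - m)\<^sup>2" "\<lambda>_. True"] by simp
    show ?case using sq_close[OF xb close d] sumeq by (simp add: K_def)
  qed
  have isum: "integrable M (\<lambda>w. (\<Sum>A\<in>P. (a A - m)\<^sup>2 * indicator {w\<in>space M. True \<and> X w \<in> A} w))"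
  proof (rule Bochner_Integration.integrable_sum)
    fix A assume A: "A \<in> P"
    have "{w\<in>space M. True \<and> X w \<in> A} = S A" by (simp add: S_def)
    moreover have "integrable M (indicator (S A) :: _ \<Rightarrow> real)"
      using Ssets[OF A] by (intro integrable_real_indicator) (auto simp: emeasure_eq_measure)
    ultimately show "integrable M (\<lambda>w. (a A - m)\<^sup>2 * indicator {w\<in>space M. True \<and> X w \<in> A} w)"
      by simp
  qed
  have "prob_space.variance M g = (\<integral>w. (g w - \<mu>)\<^sup>2 \<partial>M)" by (simp add: \<mu>_def)
  also have "\<dots> \<le> (\<integral>w. (\<Sum>A\<in>P. (a A - m)\<^sup>2 * indicator {w\<in>space M. True \<and> X w \<in> A} w) + K \<partial>M)"
  proof (rule integral_mono_AE)
    show "integrable M (\<lambda>w. (g w - \<mu>)\<^sup>2)"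
    proof (rule integrable_const_bound[where B="c\<^sup>2"])
      show "AE x in M. norm ((g x - \<mu>)\<^sup>2) \<le> c\<^sup>2"
        using gI
      proof eventually_elim
        case (elim x)
        hence "\<bar>g x - \<mu>\<bar> \<le> c" using \<mu>I by auto
        thus ?case by (metis abs_ge_zero power2_abs power_mono real_norm_def abs_power2)
      qed
    qed (use g in simp)
    show "integrable M (\<lambda>w. (\<Sum>A\<in>P. (a A - m)\<^sup>2 * indicator {w\<in>space M. True \<and> X w \<in> A} w) + K)"
      using isum by simp
  qed (rule pt)
  also have "\<dots> = (\<integral>w. (\<Sum>A\<in>P. (a A - m)\<^sup>2 * indicator {w\<in>space M. True \<and> X w \<in> A} w) \<partial>M) + K"
    using isum by (simp add: prob_space)
  also have "(\<integral>w. (\<Sum>A\<in>P. (a A - m)\<^sup>2 * indicator {w\<in>space M. True \<and> X w \<in> A} w) \<partial>M)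
      = (\<Sum>A\<in>P. measure M {w \<in> space M. True \<and> X w \<in> A} * (a A - m)\<^sup>2)"
    by (rule part_sum_integral[OF pr P X]) simp
  also have "\<dots> = (\<Sum>A\<in>P. measure M {w\<in>space M. X w \<in> A} *
            ((\<integral>w. indicator {w\<in>space M. X w \<in> A} w * V w \<partial>M) / measure M {w\<in>space M. X w \<in> A} - (\<integral>w. V w \<partial>M))\<^sup>2)"
    by (simp add: a_def S_def m_def)
  finally show ?thesis by (simp add: K_def)
qed




definition kidx :: "real \<Rightarrow> real \<Rightarrow> nat \<Rightarrow> real \<Rightarrow> nat" where
  "kidx lo d N t = min (N - 1) (nat \<lfloor>(t - lo) / d\<rfloor>)"

lemma kidx_meas[measurable]: "kidx lo d N \<in> borel \<rightarrow>\<^sub>M count_space UNIV"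
  unfolding kidx_def by measurable

lemma kidx_set_meas:
  "f \<in> borel_measurable M \<Longrightarrow> {w \<in> space M. kidx lo d N (f w) = k} \<in> sets M"
  by measurable

lemma kidx_lt: "N \<ge> 1 \<Longrightarrow> kidx lo d N t < N"
  by (simp add: kidx_def)

lemma kidx_props:
  assumes d: "d > 0" and c: "c > 0" and N: "N = nat \<lfloor>c / d\<rfloor> + 1" and t: "t \<in> {lo..lo+c}"
  shows "kidx lo d N t = nat \<lfloor>(t - lo) / d\<rfloor>"
    and "lo + d * real (kidx lo d N t) \<le> t" and "t < lo + d * real (kidx lo d N t) + d"
proof -
  have f0: "\<lfloor>(t - lo) / d\<rfloor> \<ge> 0" using t d by simp
  have "(t - lo) / d \<le> c / d" using t d by (simp add: divide_right_mono)
  hence f1: "\<lfloor>(t - lo) / d\<rfloor> \<le> \<lfloor>c / d\<rfloor>" by (rule floor_mono)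
  show k: "kidx lo d N t = nat \<lfloor>(t - lo) / d\<rfloor>"
    unfolding kidx_def N using f0 f1 by (simp add: nat_mono)
  have "real (nat \<lfloor>(t - lo) / d\<rfloor>) = of_int \<lfloor>(t - lo) / d\<rfloor>" using f0 by simp
  hence r: "real (kidx lo d N t) = of_int \<lfloor>(t - lo) / d\<rfloor>" using k by simp
  have "of_int \<lfloor>(t - lo) / d\<rfloor> * d \<le> (t - lo) / d * d"
    using d by (intro mult_right_mono) auto
  moreover have "(t - lo) / d * d = t - lo" using d by simp
  ultimately show "lo + d * real (kidx lo d N t) \<le> t" using r by (simp add: algebra_simps)
  have "(t - lo) / d * d < (of_int \<lfloor>(t - lo) / d\<rfloor> + 1) * d"
    using d by (intro mult_strict_right_mono) (auto simp: floor_correct)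
  moreover have "(t - lo) / d * d = t - lo" using d by simp
  ultimately show "t < lo + d * real (kidx lo d N t) + d" using r by (simp add: algebra_simps)
qed

lemma kidx_range:
  assumes d: "d > 0" and c: "c > 0" and N: "N = nat \<lfloor>c / d\<rfloor> + 1"
  shows "lo + d * real (kidx lo d N t) \<in> {lo..lo+c}"
proof -
  have "kidx lo d N t \<le> nat \<lfloor>c / d\<rfloor>" by (simp add: kidx_def N)
  moreover have "\<lfloor>c / d\<rfloor> \<ge> 0" using c d by simp
  ultimately have "int (kidx lo d N t) \<le> \<lfloor>c / d\<rfloor>" by linarith
  hence "real (kidx lo d N t) \<le> of_int \<lfloor>c / d\<rfloor>"
    by (metis of_int_le_iff of_int_of_nat_eq)
  also have "\<dots> \<le> c / d" by simp
  finally have "d * real (kidx lo d N t) \<le> d * (c / d)" using d by (intro mult_left_mono) auto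
  thus ?thesis using d by simp
qed




lemma var_le_mi_delta:
  fixes X :: "'w \<Rightarrow> 'x" and Y :: "'w \<Rightarrow> 'y" and f :: "'y \<Rightarrow> real"
  assumes pr: "prob_space M" and X: "X \<in> M \<rightarrow>\<^sub>M SX" and Y: "Y \<in> M \<rightarrow>\<^sub>M SY"
    and f: "f \<in> borel_measurable SY" and fI: "AE w in M. f (Y w) \<in> {lo..lo+c}" and c: "c > 0"
    and r: "mutual_info M SX X SY Y \<le> ereal r" and d: "d > 0"
  shows "prob_space.variance M (real_cond_exp M (vimage_algebra (space M) X SX) (\<lambda>w. f (Y w)))
           \<le> c\<^sup>2 / 2 * r + 4 * d * (2 * c + 4 * d)"
proof -
  interpret prob_space M by fact
  define F where "F = vimage_algebra (space M) X SX"
  have subF: "subalgebra M F"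
    unfolding subalgebra_def F_def using sets_image_in_sets[OF refl X] by simp
  interpret finite_measure_subalgebra M F
    by unfold_locales (rule subF)
  define h where "h w = f (Y w)" for w
  have hm: "h \<in> borel_measurable M" unfolding h_def using f Y by measurable
  have hI: "AE w in M. h w \<in> {lo..lo+c}" using fI by (simp add: h_def)
  have hi: "integrable M h"
  proof (rule integrable_const_bound[where B="\<bar>lo\<bar> + \<bar>c\<bar>"])
    show "AE x in M. norm (h x) \<le> \<bar>lo\<bar> + \<bar>c\<bar>"
      using hI by eventually_elim auto
  qed (rule hm)
  define g where "g = real_cond_exp M F h"
  have gm: "g \<in> borel_measurable M" unfolding g_def by simp
  have gF: "g \<in> borel_measurable F" unfolding g_def by simp
  have gI: "AE w in M. g w \<in> {lo..lo+c}"
  proof -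
    have "AE w in M. g w \<ge> lo" unfolding g_def
      by (rule real_cond_exp_ge_c[OF hi]) (use hI in \<open>auto elim: eventually_mono\<close>)
    moreover have "AE w in M. g w \<le> lo + c" unfolding g_def
      by (rule real_cond_exp_le_c[OF hi]) (use hI in \<open>auto elim: eventually_mono\<close>)
    ultimately show ?thesis by eventually_elim auto
  qed
  have gint: "(\<integral>w. g w \<partial>M) = (\<integral>w. h w \<partial>M)" unfolding g_def using real_cond_exp_int(2)[OF hi] .
  have gh: "(\<integral>w. indicator {w\<in>space M. X w \<in> A} w * g w \<partial>M) = (\<integral>w. indicator {w\<in>space M. X w \<in> A} w * h w \<partial>M)"
    if A: "A \<in> sets SX" for A
  proof -
    have "X -` A \<inter> space M \<in> sets F" unfolding F_def by (rule in_vimage_algebra[OF A])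
    from real_cond_exp_intA[OF hi this]
    have "(\<integral>w. indicator (X -` A \<inter> space M) w * h w \<partial>M) = (\<integral>w. indicator (X -` A \<inter> space M) w * g w \<partial>M)"
      by (simp add: set_lebesgue_integral_def g_def)
    moreover have "X -` A \<inter> space M = {w\<in>space M. X w \<in> A}" by auto
    ultimately show ?thesis by simp
  qed
  have Xf: "X \<in> space M \<rightarrow> space SX" using X by (simp add: measurable_def)
  have Yf: "Y \<in> space M \<rightarrow> space SY" using Y by (simp add: measurable_def)
  define N where "N = nat \<lfloor>c / d\<rfloor> + 1"
  have N1: "N \<ge> 1" by (simp add: N_def)
  define kf where "kf = kidx lo d N"
  define Bs where "Bs = (\<lambda>k. {y\<in>space SY. kf (f y) = k}) ` {..<N}"
  have Bs: "Bs \<in> fin_partitions SY"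
  proof -
    have "finite Bs" by (simp add: Bs_def)
    moreover have "Bs \<subseteq> sets SY" unfolding Bs_def kf_def using f by (auto intro!: kidx_set_meas)
    moreover have "disjoint Bs" unfolding Bs_def disjoint_def by auto
    moreover have "\<Union>Bs = space SY"
      unfolding Bs_def kf_def using kidx_lt[OF N1] by auto
    ultimately show ?thesis by (simp add: fin_partitions_def)
  qed
  define V where "V w = lo + d * real (kf (h w))" for w
  define v where "v B = lo + d * real (kf (f (SOME y. y \<in> B)))" for B
  have Vm: "V \<in> borel_measurable M" unfolding V_def kf_def using hm by measurable
  have Vh: "AE w in M. \<bar>V w - h w\<bar> \<le> d"
    using hI
  proof eventually_elim
    case (elim w)
    from kidx_props(2,3)[OF d c N_def elim] show ?case by (simp add: V_def kf_def)
  qed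
  have vI: "v B \<in> {lo..lo+c}" for B unfolding v_def kf_def by (rule kidx_range[OF d c N_def])
  have vV: "v B = V w" if vw: "w \<in> space M" and vB: "B \<in> Bs" and vY: "Y w \<in> B" for w B
  proof -
    obtain k where B: "B = {y\<in>space SY. kf (f y) = k}" using vB by (auto simp: Bs_def)
    have "(SOME y. y \<in> B) \<in> B" using vY by (rule someI)
    hence "kf (f (SOME y. y \<in> B)) = k" using B by simp
    moreover have "kf (h w) = k" using vY B by (simp add: h_def)
    ultimately show ?thesis by (simp add: v_def V_def)
  qed
  define L where "L k = {w\<in>space M. kf (g w) = k}" for k
  have LF: "L k \<in> sets F" for k
  proof -
    have "{w\<in>space F. kf (g w) = k} \<in> sets F" unfolding kf_def by (rule kidx_set_meas[OF gF])
    thus ?thesis by (simp add: L_def F_def)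
  qed
  have "\<forall>k. \<exists>T. T \<in> sets SX \<and> L k = X -` T \<inter> space M"
  proof
    fix k
    have "L k \<in> {X -` A \<inter> space M | A. A \<in> sets SX}"
      using LF[of k] sets_vimage_algebra2[OF Xf] by (simp add: F_def)
    thus "\<exists>T. T \<in> sets SX \<and> L k = X -` T \<inter> space M" by auto
  qed
  then obtain T where T: "\<And>k. T k \<in> sets SX" "\<And>k. L k = X -` T k \<inter> space M" by metis
  define T' where "T' k = (T k \<inter> space SX) - (\<Union>l<k. T l)" for k
  define R where "R = space SX - (\<Union>k<N. T k)"
  define P where "P = insert R (T' ` {..<N})"
  have T'sub: "T' k \<subseteq> T k" for k by (auto simp: T'_def)
  have P: "P \<in> fin_partitions SX"
  proof -
    have "finite P" by (simp add: P_def)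
    moreover have "P \<subseteq> sets SX"
      unfolding P_def R_def T'_def using T(1) by (auto intro!: sets.Diff sets.Int sets.finite_UN)
    moreover have "disjoint P"
    proof -
      have "T' k \<inter> T' l = {}" if "k \<noteq> l" for k l
      proof (cases "k < l")
        case True thus ?thesis by (auto simp: T'_def)
      next
        case False hence "l < k" using that by simp
        thus ?thesis by (auto simp: T'_def)
      qed
      moreover have "R \<inter> T' k = {}" if "k < N" for k using that T'sub[of k] by (auto simp: R_def)
      ultimately show ?thesis unfolding disjoint_def P_def
      proof (intro ballI impI)
        fix a b assume a: "a \<in> insert R (T' ` {..<N})" and b: "b \<in> insert R (T' ` {..<N})" and ab: "a \<noteq> b"
        assume H1: "\<And>k l. k \<noteq> l \<Longrightarrow> T' k \<inter> T' l = {}" and H2: "\<And>k. k < N \<Longrightarrow> R \<inter> T' k = {}"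
        show "a \<inter> b = {}"
        proof (cases "a = R")
          case True
          then obtain l where "l < N" "b = T' l" using b ab by auto
          thus ?thesis using H2 True by simp
        next
          case False
          then obtain k where k: "k < N" "a = T' k" using a by auto
          show ?thesis
          proof (cases "b = R")
            case True thus ?thesis using H2[OF k(1)] k by (simp add: Int_commute)
          next
            case False
            then obtain l where l: "l < N" "b = T' l" using b by auto
            hence "k \<noteq> l" using k ab by auto
            from H1[OF this] show ?thesis using k l by simp
          qed
        qed
      qed
    qed
    moreover have "\<Union>P = space SX"
    proof
      show "\<Union>P \<subseteq> space SX" unfolding P_def R_def T'_def by auto
      show "space SX \<subseteq> \<Union>P"
      proof
        fix x assume x: "x \<in> space SX"
        show "x \<in> \<Union>P"
        proof (cases "\<exists>k<N. x \<in> T k")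
          case True
          define k where "k = (LEAST k. k < N \<and> x \<in> T k)"
          have k: "k < N \<and> x \<in> T k" unfolding k_def by (rule LeastI_ex) (use True in auto)
          have "\<not> (l < N \<and> x \<in> T l)" if "l < k" for l
            using not_less_Least[of l "\<lambda>k. k < N \<and> x \<in> T k"] that by (simp add: k_def)
          hence "x \<notin> T l" if "l < k" for l using that k by auto
          hence "x \<in> T' k" using x k by (auto simp: T'_def)
          thus ?thesis using k by (auto simp: P_def)
        next
          case False
          hence "x \<in> R" using x by (auto simp: R_def)
          thus ?thesis by (auto simp: P_def)
        qed
      qed
    qed
    ultimately show ?thesis by (simp add: fin_partitions_def)
  qed
  have inT: "X w \<in> T (kf (g w))" if "w \<in> space M" for w
    using T(2)[of "kf (g w)"] that by (auto simp: L_def)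
  have cell: "\<exists>t. AE w in M. X w \<in> A \<longrightarrow> \<bar>g w - t\<bar> \<le> d" if A: "A \<in> P" for A
  proof (cases "A = R")
    case True
    have "AE w in M. X w \<in> A \<longrightarrow> \<bar>g w - 0\<bar> \<le> d"
      using AE_space
    proof eventually_elim
      case (elim w)
      have "X w \<notin> R" using inT[OF elim] kidx_lt[OF N1] by (auto simp: R_def kf_def)
      thus ?case using True by simp
    qed
    thus ?thesis by blast
  next
    case False
    then obtain k where k: "k < N" "A = T' k" using A by (auto simp: P_def)
    have "AE w in M. X w \<in> A \<longrightarrow> \<bar>g w - (lo + d * real k)\<bar> \<le> d"
      using gI AE_space
    proof eventually_elim
      case (elim w)
      show ?case
      proof
        assume "X w \<in> A"
        hence "X w \<in> T k" using k T'sub by auto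
        hence "w \<in> L k" using T(2)[of k] elim(2) by auto
        hence kk: "kf (g w) = k" by (simp add: L_def)
        from kidx_props(2,3)[OF d c N_def elim(1)] kk
        show "\<bar>g w - (lo + d * real k)\<bar> \<le> d" by (simp add: kf_def)
      qed
    qed
    thus ?thesis by blast
  qed
  have AV: "prob_space.variance M g \<le> (\<Sum>A\<in>P. measure M {w\<in>space M. X w \<in> A} *
            ((\<integral>w. indicator {w\<in>space M. X w \<in> A} w * V w \<partial>M) / measure M {w\<in>space M. X w \<in> A} - (\<integral>w. V w \<partial>M))\<^sup>2)
          + 4 * d * (2 * c + 4 * d)"
    by (rule approx_var[OF pr P X gm gI hm hI Vm Vh gh gint cell]) (use P c d in \<open>auto simp: fin_partitions_def\<close>)
  have Qsets: "{w\<in>space M. X w \<in> A} \<in> sets M" if "A \<in> sets SX" for A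
  proof -
    have "X -` A \<inter> space M \<in> sets M" by (rule measurable_sets[OF X that])
    moreover have "X -` A \<inter> space M = {w\<in>space M. X w \<in> A}" by auto
    ultimately show ?thesis by simp
  qed
  have PS: "A \<in> sets SX" if "A \<in> P" for A using P that by (auto simp: fin_partitions_def)
  have EQ: "(\<integral>w. indicator {w\<in>space M. Q w} w * V w \<partial>M) = (\<Sum>B\<in>Bs. measure M {w \<in> space M. Q w \<and> Y w \<in> B} * v B)"
    if Qm: "{w\<in>space M. Q w} \<in> sets M" for Q
  proof -
    have "(\<integral>w. indicator {w\<in>space M. Q w} w * V w \<partial>M) = (\<integral>w. (\<Sum>B\<in>Bs. v B * indicator {w \<in> space M. Q w \<and> Y w \<in> B} w) \<partial>M)"
    proof (rule Bochner_Integration.integral_cong[OF refl])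
      fix w assume w: "w \<in> space M"
      have Yw: "Y w \<in> space SY" using Yf w by auto
      obtain B0 where B0: "B0 \<in> Bs" "Y w \<in> B0" using part_unique[OF Bs Yw] by auto
      have "(\<Sum>B\<in>Bs. v B * indicator {w \<in> space M. Q w \<and> Y w \<in> B} w) = (if Q w then v B0 else 0)"
        by (rule part_sum_eval[OF Bs Yf w B0])
      also have "\<dots> = indicator {w\<in>space M. Q w} w * V w" using vV[OF w B0] w by (simp add: indicator_def)
      finally show "indicator {w\<in>space M. Q w} w * V w = (\<Sum>B\<in>Bs. v B * indicator {w \<in> space M. Q w \<and> Y w \<in> B} w)" by simp
    qed
    also have "\<dots> = (\<Sum>B\<in>Bs. measure M {w \<in> space M. Q w \<and> Y w \<in> B} * v B)"
      by (rule part_sum_integral[OF pr Bs Y Qm])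
    finally show ?thesis .
  qed
  define p where "p A B = measure M {w\<in>space M. X w \<in> A \<and> Y w \<in> B}" for A B
  define pa where "pa A = measure M {w\<in>space M. X w \<in> A}" for A
  define pb where "pb B = measure M {w\<in>space M. Y w \<in> B}" for B
  have EA: "(\<integral>w. indicator {w\<in>space M. X w \<in> A} w * V w \<partial>M) = (\<Sum>B\<in>Bs. p A B * v B)" if "A \<in> P" for A
    using EQ[OF Qsets[OF PS[OF that]]] by (simp add: p_def)
  have Em: "(\<integral>w. V w \<partial>M) = (\<Sum>B\<in>Bs. pb B * v B)"
  proof -
    have "(\<integral>w. indicator (space M) w * V w \<partial>M) = (\<integral>w. V w \<partial>M)"
      by (rule Bochner_Integration.integral_cong) auto
    thus ?thesis using EQ[of "\<lambda>_. True"] by (simp add: pb_def)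
  qed
  have pa_sum: "pa A = (\<Sum>B\<in>Bs. p A B)" if "A \<in> P" for A
    using part_measure_sum[OF pr Bs Y Qsets[OF PS[OF that]]] by (simp add: pa_def p_def)
  have pb_sum: "pb B = (\<Sum>A\<in>P. p A B)" if "B \<in> Bs" for B
  proof -
    have Bm: "{w\<in>space M. Y w \<in> B} \<in> sets M"
    proof -
      have "B \<in> sets SY" using Bs that by (auto simp: fin_partitions_def)
      hence "Y -` B \<inter> space M \<in> sets M" by (rule measurable_sets[OF Y])
      moreover have "Y -` B \<inter> space M = {w\<in>space M. Y w \<in> B}" by auto
      ultimately show ?thesis by simp
    qed
    from part_measure_sum[OF pr P X Bm]
    show ?thesis by (simp add: pb_def p_def conj_commute)
  qed
  have s1: "(\<Sum>A\<in>P. pa A) = 1"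
    using part_measure_sum[OF pr P X, of "\<lambda>_. True"] by (simp add: pa_def prob_space)
  have finP: "finite P" and finB: "finite Bs" using P Bs by (auto simp: fin_partitions_def)
  have MD: "(\<Sum>A\<in>P. pa A * ((\<Sum>B\<in>Bs. p A B * v B) / pa A - (\<Sum>B\<in>Bs. pb B * v B))\<^sup>2)
         \<le> c\<^sup>2 / 2 * (\<Sum>A\<in>P. \<Sum>B\<in>Bs. if p A B = 0 then 0 else p A B * ln (p A B / (pa A * pb B)))"
    by (rule mi_disc[OF finP finB _ pa_sum pb_sum s1 vI c]) (simp add: p_def)
  have Qle: "(\<Sum>A\<in>P. \<Sum>B\<in>Bs. if p A B = 0 then 0 else p A B * ln (p A B / (pa A * pb B))) \<le> r"
  proof -
    have "ereal (\<Sum>A\<in>P. \<Sum>B\<in>Bs. if p A B = 0 then 0 else p A B * ln (p A B / (pa A * pb B))) \<le> mutual_info M SX X SY Y"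
      unfolding p_def pa_def pb_def using quant_le_mi[OF P Bs, of M X Y] by (simp add: Let_def)
    also have "\<dots> \<le> ereal r" by (rule r)
    finally show ?thesis by simp
  qed
  have "(\<Sum>A\<in>P. measure M {w\<in>space M. X w \<in> A} *
            ((\<integral>w. indicator {w\<in>space M. X w \<in> A} w * V w \<partial>M) / measure M {w\<in>space M. X w \<in> A} - (\<integral>w. V w \<partial>M))\<^sup>2)
        = (\<Sum>A\<in>P. pa A * ((\<Sum>B\<in>Bs. p A B * v B) / pa A - (\<Sum>B\<in>Bs. pb B * v B))\<^sup>2)"
    by (rule sum.cong[OF refl]) (simp add: EA Em pa_def)
  hence "prob_space.variance M g \<le> c\<^sup>2 / 2 * (\<Sum>A\<in>P. \<Sum>B\<in>Bs. if p A B = 0 then 0 else p A B * ln (p A B / (pa A * pb B))) + 4 * d * (2 * c + 4 * d)"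
    using AV MD by linarith
  also have "\<dots> \<le> c\<^sup>2 / 2 * r + 4 * d * (2 * c + 4 * d)"
    using Qle by (simp add: mult_left_mono)
  moreover have "h = (\<lambda>w. f (Y w))" by (simp add: h_def fun_eq_iff)
  ultimately show ?thesis by (simp add: g_def F_def)
qed




lemma var_le_mi:
  fixes X :: "'w \<Rightarrow> 'x" and Y :: "'w \<Rightarrow> 'y" and f :: "'y \<Rightarrow> real"
  assumes pr: "prob_space M" and X: "X \<in> M \<rightarrow>\<^sub>M SX" and Y: "Y \<in> M \<rightarrow>\<^sub>M SY"
    and f: "f \<in> borel_measurable SY" and fI: "AE w in M. f (Y w) \<in> {lo..lo+c}" and c: "c > 0"
    and r: "mutual_info M SX X SY Y \<le> ereal r"
  shows "prob_space.variance M (real_cond_exp M (vimage_algebra (space M) X SX) (\<lambda>w. f (Y w)))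
           \<le> c\<^sup>2 / 2 * r"
proof (rule field_le_epsilon)
  fix e :: real assume e: "e > 0"
  define d where "d = min 1 (e / (4 * (2 * c + 4)))"
  have d0: "d > 0" using e c by (simp add: d_def)
  have d1: "d \<le> 1" by (simp add: d_def)
  have d2: "d \<le> e / (4 * (2 * c + 4))" by (simp add: d_def)
  have "4 * d * (2 * c + 4 * d) \<le> 4 * d * (2 * c + 4)"
    using d0 d1 by (intro mult_left_mono) auto
  also have "\<dots> \<le> 4 * (e / (4 * (2 * c + 4))) * (2 * c + 4)"
    using d2 c by (intro mult_right_mono) auto
  also have "\<dots> = e" using c by (simp add: field_simps)
  finally have K: "4 * d * (2 * c + 4 * d) \<le> e" .
  show "prob_space.variance M (real_cond_exp M (vimage_algebra (space M) X SX) (\<lambda>w. f (Y w))) \<le> c\<^sup>2 / 2 * r + e"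
    using var_le_mi_delta[OF pr X Y f fI c r d0] K by linarith
qed

lemma span_bounds:
  fixes Z :: "'w \<Rightarrow> real"
  assumes pr: "prob_space M" and Z: "Z \<in> borel_measurable M" and sp: "span_rv M Z \<le> ereal K"
  shows "\<exists>lo. AE w in M. Z w \<in> {lo..lo+K}"
proof -
  interpret prob_space M by fact
  define s1 where "s1 = esssup M (\<lambda>w. ereal (Z w))"
  define s2 where "s2 = esssup M (\<lambda>w. - ereal (Z w))"
  have A1: "AE w in M. ereal (Z w) \<le> s1" unfolding s1_def by (rule esssup_AE)
  have A2: "AE w in M. - ereal (Z w) \<le> s2" unfolding s2_def by (rule esssup_AE)
  have s1m: "s1 \<noteq> -\<infinity>"
  proof
    assume h: "s1 = -\<infinity>"
    from A1 have "AE w in M. False" by (rule eventually_mono) (simp add: h)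
    thus False by simp
  qed
  have s2m: "s2 \<noteq> -\<infinity>"
  proof
    assume h: "s2 = -\<infinity>"
    from A2 have "AE w in M. False" by (rule eventually_mono) (simp add: h)
    thus False by simp
  qed
  have sum: "s1 + s2 \<le> ereal K" using sp by (simp add: span_rv_def s1_def s2_def)
  have s1p: "s1 \<noteq> \<infinity>" using sum s2m by auto
  have s2p: "s2 \<noteq> \<infinity>" using sum s1m by auto
  obtain a1 where a1: "s1 = ereal a1" using s1m s1p by (cases s1) auto
  obtain a2 where a2: "s2 = ereal a2" using s2m s2p by (cases s2) auto
  have "a1 + a2 \<le> K" using sum a1 a2 by simp
  have "AE w in M. Z w \<in> {-a2..-a2+K}"
    using A1 A2
  proof eventually_elim
    case (elim w)
    hence "Z w \<le> a1" "- Z w \<le> a2" using a1 a2 by auto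
    thus ?case using \<open>a1 + a2 \<le> K\<close> by auto
  qed
  thus ?thesis by blast
qed




lemma var_cong:
  fixes g1 g2 :: "'w \<Rightarrow> real"
  assumes pr: "prob_space M" and g1: "g1 \<in> borel_measurable M" and g2: "g2 \<in> borel_measurable M"
    and ae: "AE w in M. g1 w = g2 w"
  shows "prob_space.variance M g1 = prob_space.variance M g2"
proof -
  interpret prob_space M by fact
  have e: "expectation g1 = expectation g2" by (rule integral_cong_AE[OF g1 g2 ae])
  show ?thesis unfolding e
    by (rule integral_cong_AE) (use g1 g2 ae in \<open>auto elim: eventually_mono\<close>)
qed

lemma bounded_integrable:
  fixes Z :: "'w \<Rightarrow> real"
  assumes pr: "prob_space M" and "Z \<in> borel_measurable M" "AE w in M. Z w \<in> {lo..lo+K}"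
  shows "integrable M Z"
proof -
  interpret prob_space M by fact
  show ?thesis
  proof (rule integrable_const_bound[where B="\<bar>lo\<bar> + \<bar>K\<bar>"])
    show "AE x in M. norm (Z x) \<le> \<bar>lo\<bar> + \<bar>K\<bar>" using assms(3) by eventually_elim auto
  qed (rule assms(2))
qed

theorem lemma13:
  fixes M :: "'w measure"
    and Pi :: "'w \<Rightarrow> real ^ 'a::finite"
    and A :: "'w \<Rightarrow> 'a"
    and H :: "'w \<Rightarrow> 'h"
    and Qd :: "'w \<Rightarrow> 'h \<Rightarrow> 'a \<Rightarrow> real ^ 'n::finite"
    and W :: "'w \<Rightarrow> real ^ 'n"
    and M1 M2 :: real
  assumes prob: "prob_space M"
    and Pi_meas: "Pi \<in> borel_measurable M"
    and Pi_dist: "AE w in M. (\<forall>a. 0 \<le> Pi w $ a) \<and> (\<Sum>a\<in>UNIV. Pi w $ a) = 1"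
    and A_meas: "A \<in> measurable M (count_space UNIV)"
    and Q_meas: "(\<lambda>w. (\<chi> a. Qd w (H w) a)) \<in> borel_measurable M"
    and W_meas: "W \<in> borel_measurable M"
    and A_indep: "distr M ((borel \<Otimes>\<^sub>M borel) \<Otimes>\<^sub>M count_space UNIV)
                    (\<lambda>w. ((Pi w, (\<chi> a. Qd w (H w) a)), A w))
                  = distr M (borel \<Otimes>\<^sub>M borel) (\<lambda>w. (Pi w, (\<chi> a. Qd w (H w) a)))
                    \<Otimes>\<^sub>M distr M (count_space UNIV) A"
    and W_zero_mean: "\<And>i. AE w in M.
        real_cond_exp M
          (vimage_algebra (space M) (\<lambda>w. (Pi w, A w, (\<chi> a. Qd w (H w) a)))
             (borel \<Otimes>\<^sub>M count_space UNIV \<Otimes>\<^sub>M borel))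
          (\<lambda>w. W w $ i) w = 0"
    and Q_span: "\<And>i. span_rv M (\<lambda>w. Qd w (H w) (A w) $ i) \<le> ereal M1"
    and W_span: "\<And>i. span_rv M (\<lambda>w. W w $ i) \<le> ereal M2"
  shows "mutual_info M borel Pi (count_space UNIV \<Otimes>\<^sub>M borel)
            (\<lambda>w. (A w, Qd w (H w) (A w) + W w))
         \<ge> ereal (2 / (real CARD('n) * (M1 + M2)\<^sup>2) *
              (\<Sum>i\<in>UNIV. prob_space.variance M
                 (real_cond_exp M (vimage_algebra (space M) Pi borel)
                    (\<lambda>w. Qd w (H w) (A w) $ i))))"
proof -
  interpret prob_space M by (rule prob)
  define Qv where "Qv w = (\<chi> a. Qd w (H w) a)" for w
  have Qv[measurable]: "Qv \<in> borel_measurable M" using Q_meas by (simp add: Qv_def[abs_def])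
  note [measurable] = Pi_meas A_meas W_meas Q_meas
  have QA[measurable]: "(\<lambda>w. Qd w (H w) (A w)) \<in> borel_measurable M"
  proof -
    have "(\<lambda>w. (\<lambda>a w. Qv w $ a) (A w) w) \<in> borel_measurable M"
    proof (rule measurable_compose_countable'[where f="\<lambda>a w. Qv w $ a" and g=A and I=UNIV])
      fix a :: 'a assume "a \<in> UNIV"
      show "(\<lambda>w. Qv w $ a) \<in> borel_measurable M"
        by (rule borel_measurable_continuous_on[OF _ Qv]) (intro continuous_intros)
    qed (simp_all add: A_meas)
    thus ?thesis by (simp add: Qv_def)
  qed
  define Y where "Y = (\<lambda>w. (A w, Qd w (H w) (A w) + W w))"
  have Y: "Y \<in> M \<rightarrow>\<^sub>M count_space UNIV \<Otimes>\<^sub>M borel" unfolding Y_def by measurable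
  define F where "F = vimage_algebra (space M) Pi borel"
  define c where "c = M1 + M2"
  define MI where "MI = mutual_info M borel Pi (count_space UNIV \<Otimes>\<^sub>M borel) Y"
  define Qi where "Qi = (\<lambda>i w. Qd w (H w) (A w) $ i)"
  define Wi where "Wi = (\<lambda>i w. W w $ i)"
  have Qim: "Qi i \<in> borel_measurable M" for i unfolding Qi_def
    by (rule borel_measurable_continuous_on[OF _ QA]) (intro continuous_intros)
  have Wim: "Wi i \<in> borel_measurable M" for i unfolding Wi_def
    by (rule borel_measurable_continuous_on[OF _ W_meas]) (intro continuous_intros)
  have Qb: "\<exists>lo. AE w in M. Qi i w \<in> {lo..lo+M1}" for i
    by (rule span_bounds[OF prob Qim]) (simp add: Qi_def Q_span)
  have Wb: "\<exists>lo. AE w in M. Wi i w \<in> {lo..lo+M2}" for i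
    by (rule span_bounds[OF prob Wim]) (simp add: Wi_def W_span)
  have Yb: "\<exists>lo. AE w in M. Qi i w + Wi i w \<in> {lo..lo+c}" for i
  proof -
    obtain l1 where l1: "AE w in M. Qi i w \<in> {l1..l1+M1}" using Qb by blast
    obtain l2 where l2: "AE w in M. Wi i w \<in> {l2..l2+M2}" using Wb by blast
    have "AE w in M. Qi i w + Wi i w \<in> {l1+l2..(l1+l2)+c}"
      using l1 l2 by eventually_elim (auto simp: c_def)
    thus ?thesis by blast
  qed
  have MI0: "0 \<le> MI"
  proof -
    have P1: "{UNIV} \<in> fin_partitions (borel :: (real^'a) measure)" by (simp add: fin_partitions_def)
    have P2: "{UNIV} \<in> fin_partitions (count_space (UNIV::'a set) \<Otimes>\<^sub>M (borel :: (real^'n) measure))"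
      using sets.top[of "count_space (UNIV::'a set) \<Otimes>\<^sub>M (borel :: (real^'n) measure)"]
      by (simp add: fin_partitions_def space_pair_measure)
    from quant_le_mi[OF P1 P2, of M Pi Y]
    show ?thesis by (simp add: MI_def prob_space zero_ereal_def)
  qed
  have c0: "c \<ge> 0"
  proof (rule ccontr)
    assume "\<not> c \<ge> 0"
    obtain lo where "AE w in M. Qi undefined w + Wi undefined w \<in> {lo..lo+c}" using Yb by blast
    hence "AE w in M. False" by (rule eventually_mono) (use \<open>\<not> c \<ge> 0\<close> in auto)
    thus False by simp
  qed
  show ?thesis
  proof (cases "c = 0")
    case True
    thus ?thesis using MI0 by (simp add: MI_def Y_def c_def zero_ereal_def)
  next
    case False
    hence cpos: "c > 0" using c0 by simp
    define G where "G = vimage_algebra (space M) (\<lambda>w. (Pi w, A w, (\<chi> a. Qd w (H w) a)))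
             (borel \<Otimes>\<^sub>M count_space UNIV \<Otimes>\<^sub>M borel)"
    have trip: "(\<lambda>w. (Pi w, A w, (\<chi> a. Qd w (H w) a))) \<in> M \<rightarrow>\<^sub>M (borel \<Otimes>\<^sub>M count_space UNIV \<Otimes>\<^sub>M borel)"
      by measurable
    have subG: "subalgebra M G" unfolding subalgebra_def G_def using sets_image_in_sets[OF refl trip] by simp
    have subF: "subalgebra M F" unfolding subalgebra_def F_def using sets_image_in_sets[OF refl Pi_meas] by simp
    have subGF: "subalgebra G F"
      unfolding subalgebra_def
    proof
      show "space F = space G" by (simp add: F_def G_def)
      show "sets F \<subseteq> sets G"
      proof
        fix S assume "S \<in> sets F"
        then obtain T where T: "T \<in> sets borel" "S = Pi -` T \<inter> space M"
          using sets_vimage_algebra2[of Pi "space M" borel] by (auto simp: F_def)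
        have "T \<times> space (count_space UNIV \<Otimes>\<^sub>M (borel :: ((real^'n)^'a) measure)) \<in> sets (borel \<Otimes>\<^sub>M count_space UNIV \<Otimes>\<^sub>M borel)"
          by (rule pair_measureI) (use T in auto)
        hence "(\<lambda>w. (Pi w, A w, (\<chi> a. Qd w (H w) a))) -` (T \<times> space (count_space UNIV \<Otimes>\<^sub>M (borel :: ((real^'n)^'a) measure))) \<inter> space M \<in> sets G"
          unfolding G_def by (rule in_vimage_algebra)
        moreover have "(\<lambda>w. (Pi w, A w, (\<chi> a. Qd w (H w) a))) -` (T \<times> space (count_space UNIV \<Otimes>\<^sub>M (borel :: ((real^'n)^'a) measure))) \<inter> space M = S"
          using T by (auto simp: space_pair_measure)
        ultimately show "S \<in> sets G" by simp
      qed
    qed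
    interpret Fs: finite_measure_subalgebra M F by unfold_locales (rule subF)
    have Qint: "integrable M (Qi i)" for i
    proof -
      obtain l where "AE w in M. Qi i w \<in> {l..l+M1}" using Qb by blast
      thus ?thesis by (rule bounded_integrable[OF prob Qim])
    qed
    have Wint: "integrable M (Wi i)" for i
    proof -
      obtain l where "AE w in M. Wi i w \<in> {l..l+M2}" using Wb by blast
      thus ?thesis by (rule bounded_integrable[OF prob Wim])
    qed
    have condW: "AE w in M. real_cond_exp M F (Wi i) w = 0" for i
    proof -
      have 1: "AE w in M. real_cond_exp M F (real_cond_exp M G (Wi i)) w = real_cond_exp M F (Wi i) w"
        by (rule Fs.real_cond_exp_nested_subalg[OF subG subGF Wint])
      have 2: "AE w in M. real_cond_exp M F (real_cond_exp M G (Wi i)) w = real_cond_exp M F (\<lambda>_. 0) w"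
        by (rule Fs.real_cond_exp_cong) (use W_zero_mean[of i] in \<open>simp_all add: G_def Wi_def\<close>)
      have 3: "AE w in M. real_cond_exp M F (\<lambda>_. 0) w = 0"
        using Fs.real_cond_exp_F_meas[of "\<lambda>_. 0"] by simp
      from 1 2 3 show ?thesis by eventually_elim simp
    qed
    have condQ: "AE w in M. real_cond_exp M F (Qi i) w = real_cond_exp M F (\<lambda>w. snd (Y w) $ i) w" for i
    proof -
      have "AE w in M. real_cond_exp M F (\<lambda>w. Qi i w + Wi i w) w = real_cond_exp M F (Qi i) w + real_cond_exp M F (Wi i) w"
        by (rule Fs.real_cond_exp_add[OF Qint Wint])
      moreover have "(\<lambda>w. snd (Y w) $ i) = (\<lambda>w. Qi i w + Wi i w)" by (simp add: Y_def Qi_def Wi_def fun_eq_iff)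
      ultimately show ?thesis using condW[of i] by (auto elim: eventually_elim2)
    qed
    have key: "prob_space.variance M (real_cond_exp M F (Qi i)) \<le> c\<^sup>2 / 2 * r" if r: "MI \<le> ereal r" for i r
    proof -
      obtain lo where lo: "AE w in M. Qi i w + Wi i w \<in> {lo..lo+c}" using Yb by blast
      have fm: "(\<lambda>p::'a \<times> (real^'n). snd p $ i) \<in> borel_measurable (count_space UNIV \<Otimes>\<^sub>M borel)"
        by (rule borel_measurable_continuous_on[where f="\<lambda>x. x $ i", OF _ measurable_snd]) (intro continuous_intros)
      have fI: "AE w in M. (\<lambda>p::'a \<times> (real^'n). snd p $ i) (Y w) \<in> {lo..lo+c}" using lo by (simp add: Y_def Qi_def Wi_def)
      from var_le_mi[OF prob Pi_meas Y fm fI cpos r[unfolded MI_def]]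
      have "prob_space.variance M (real_cond_exp M F (\<lambda>w. snd (Y w) $ i)) \<le> c\<^sup>2 / 2 * r" by (simp add: F_def)
      moreover have "prob_space.variance M (real_cond_exp M F (Qi i)) = prob_space.variance M (real_cond_exp M F (\<lambda>w. snd (Y w) $ i))"
        by (rule var_cong[OF prob _ _ condQ]) simp_all
      ultimately show ?thesis by simp
    qed
    show ?thesis
    proof (cases MI)
      case (real r)
      have S: "(\<Sum>i\<in>UNIV. prob_space.variance M (real_cond_exp M F (Qi i))) \<le> real CARD('n) * (c\<^sup>2 / 2 * r)"
      proof -
        have "(\<Sum>i\<in>UNIV. prob_space.variance M (real_cond_exp M F (Qi i))) \<le> (\<Sum>i\<in>(UNIV::'n set). c\<^sup>2 / 2 * r)"
          by (rule sum_mono) (rule key, simp add: real)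
        thus ?thesis by simp
      qed
      have n: "real CARD('n) > 0" by simp
      have "2 / (real CARD('n) * c\<^sup>2) * (\<Sum>i\<in>UNIV. prob_space.variance M (real_cond_exp M F (Qi i)))
           \<le> 2 / (real CARD('n) * c\<^sup>2) * (real CARD('n) * (c\<^sup>2 / 2 * r))"
        by (rule mult_left_mono[OF S]) (use n cpos in simp)
      also have "\<dots> = r" using n cpos by (simp add: field_simps)
      finally have "2 / (real CARD('n) * c\<^sup>2) * (\<Sum>i\<in>UNIV. prob_space.variance M (real_cond_exp M F (Qi i))) \<le> r" .
      thus ?thesis using real by (simp add: MI_def Y_def c_def F_def Qi_def)
    next
      case PInf
      thus ?thesis by (simp add: MI_def Y_def)
    next
      case MInf
      thus ?thesis using MI0 by simp
    qed
  qed
qed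


end
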